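(* Let $\kappa$ be a regular uncountable cardinal, $I$ an ideal on $\kappa$, and $L=\{\lambda+1:\lambda<\kappa \text{ a limit ordinal}\}$. Then $I$ is normal if and only if $I$ is pleasant and $L\in I$.
   Context: An ideal on $\kappa$ is a family of subsets of $\kappa$ closed under subsets and finite unions, which is $<\kappa$-complete and contains all singletons. For $A\subseteq\kappa$ and $X_\alpha\subseteq\kappa$, $\bigtriangledown_{\alpha\in A}X_\alpha=\{\xi<\kappa:\exists\alpha<\xi\,(\alpha\in A\wedge \xi\in X_\alpha)\}$. $I$ is normal if $X_\alpha\in I$ for all $\alpha<\kappa$ implies $\bigtriangledown_{\alpha<\kappa}X_\alpha\in I$. $I$ is pleasant if whenever $A\in I$ and $X_\alpha\in I$ for all $\alpha$, then $\bigtriangledown_{\alpha\in A}X_\alpha\in I$. *)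

theory Defs
  imports Main "HOL-Library.Countable_Set"
begin

text \<open>The cardinal kappa is represented by a cardinal well-order r (Card_order r);
  the ordinals below kappa are the elements of Field r, ordered by r.\<close>

definition strict_lt :: "'a rel \<Rightarrow> 'a \<Rightarrow> 'a \<Rightarrow> bool" where
  "strict_lt r a b \<longleftrightarrow> (a, b) \<in> r \<and> a \<noteq> b"

definition is_succ :: "'a rel \<Rightarrow> 'a \<Rightarrow> 'a \<Rightarrow> bool" where
  "is_succ r a b \<longleftrightarrow> strict_lt r a b \<and> (\<forall>c. strict_lt r a c \<longrightarrow> (b, c) \<in> r)"

definition is_limit :: "'a rel \<Rightarrow> 'a \<Rightarrow> bool" where
  "is_limit r l \<longleftrightarrow> l \<in> Field r \<and> (\<exists>a. strict_lt r a l) \<and> \<not> (\<exists>a. is_succ r a l)"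

definition succ_of_limits :: "'a rel \<Rightarrow> 'a set" where
  "succ_of_limits r = {b. \<exists>l. is_limit r l \<and> is_succ r l b}"

definition is_ideal :: "'a rel \<Rightarrow> 'a set set \<Rightarrow> bool" where
  "is_ideal r I \<longleftrightarrow>
     I \<subseteq> Pow (Field r) \<and>
     (\<forall>X Y. X \<in> I \<and> Y \<subseteq> X \<longrightarrow> Y \<in> I) \<and>
     (\<forall>X Y. X \<in> I \<and> Y \<in> I \<longrightarrow> X \<union> Y \<in> I) \<and>
     (\<forall>F. F \<subseteq> I \<and> (card_of F, r) \<in> ordLess \<longrightarrow> \<Union>F \<in> I) \<and>
     (\<forall>a \<in> Field r. {a} \<in> I)"

definition diag_union :: "'a rel \<Rightarrow> 'a set \<Rightarrow> ('a \<Rightarrow> 'a set) \<Rightarrow> 'a set" where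
  "diag_union r A X = {\<xi> \<in> Field r. \<exists>\<alpha>. strict_lt r \<alpha> \<xi> \<and> \<alpha> \<in> A \<and> \<xi> \<in> X \<alpha>}"

definition normal_ideal :: "'a rel \<Rightarrow> 'a set set \<Rightarrow> bool" where
  "normal_ideal r I \<longleftrightarrow>
     (\<forall>X. (\<forall>\<alpha> \<in> Field r. X \<alpha> \<in> I) \<longrightarrow> diag_union r (Field r) X \<in> I)"

definition pleasant_ideal :: "'a rel \<Rightarrow> 'a set set \<Rightarrow> bool" where
  "pleasant_ideal r I \<longleftrightarrow>
     (\<forall>A X. A \<in> I \<and> (\<forall>\<alpha> \<in> Field r. X \<alpha> \<in> I) \<longrightarrow> diag_union r A X \<in> I)"

end

theory Submission
  imports Defs
begin

lemma wo_facts: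
  assumes "Well_order r"
  shows "trans r" "antisym r" "total_on (Field r) r" "refl_on (Field r) r" "wf (r - Id)"
  using assms by (auto simp: well_order_on_def linear_order_on_def partial_order_on_def preorder_on_def)

lemma strict_Field:
  "strict_lt r a b \<Longrightarrow> a \<in> Field r \<and> b \<in> Field r"
  unfolding strict_lt_def by (auto intro: FieldI1 FieldI2)

lemma strict_F1: "strict_lt r a b \<Longrightarrow> a \<in> Field r"
  unfolding strict_lt_def by (auto intro: FieldI1)

lemma strict_F2: "strict_lt r a b \<Longrightarrow> b \<in> Field r"
  unfolding strict_lt_def by (auto intro: FieldI2)

lemma ideal_sub0: "is_ideal r I \<Longrightarrow> (\<forall>X Y. X \<in> I \<and> Y \<subseteq> X \<longrightarrow> Y \<in> I)"
  unfolding is_ideal_def by (elim conjE)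

lemma ideal_un0: "is_ideal r I \<Longrightarrow> (\<forall>X Y. X \<in> I \<and> Y \<in> I \<longrightarrow> X \<union> Y \<in> I)"
  unfolding is_ideal_def by (elim conjE)

lemma ideal_sing0: "is_ideal r I \<Longrightarrow> (\<forall>a \<in> Field r. {a} \<in> I)"
  unfolding is_ideal_def by (elim conjE)

lemma ideal_compl0: "is_ideal r I \<Longrightarrow> (\<forall>F. F \<subseteq> I \<and> (card_of F, r) \<in> ordLess \<longrightarrow> \<Union>F \<in> I)"
  unfolding is_ideal_def by (elim conjE)

lemma succ_unique:
  assumes "Well_order r" "is_succ r a b" "is_succ r a c"
  shows "b = c"
  using assms wo_facts(2)[OF assms(1)] unfolding is_succ_def antisym_def by blast

lemma refl_Field: "Well_order r \<Longrightarrow> x \<in> Field r \<Longrightarrow> (x, x) \<in> r"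
  using wo_facts(4) by (metis refl_onD)

lemma total_Field: "Well_order r \<Longrightarrow> x \<in> Field r \<Longrightarrow> y \<in> Field r \<Longrightarrow> (x, y) \<in> r \<or> (y, x) \<in> r"
  using wo_facts(3) refl_Field by (metis total_on_def)

lemma trans_r: "Well_order r \<Longrightarrow> (x, y) \<in> r \<Longrightarrow> (y, z) \<in> r \<Longrightarrow> (x, z) \<in> r"
  using wo_facts(1) by (metis transD)

lemma antisym_r: "Well_order r \<Longrightarrow> (x, y) \<in> r \<Longrightarrow> (y, x) \<in> r \<Longrightarrow> x = y"
  using wo_facts(2) by (metis antisymD)

lemma ideal_union_small:
  assumes "is_ideal r I" "(card_of S, r) \<in> ordLess" "\<forall>a\<in>S. X a \<in> I"
  shows "\<Union>(X ` S) \<in> I"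
proof -
  have "(card_of (X ` S), card_of S) \<in> ordLeq" by (rule card_of_image)
  then have "(card_of (X ` S), r) \<in> ordLess" using assms(2) ordLeq_ordLess_trans by blast
  moreover have "X ` S \<subseteq> I" using assms(3) by blast
  ultimately show ?thesis using ideal_compl0[OF assms(1)] by blast
qed

lemma limits_unbounded:
  assumes co: "Card_order r" and unc: "\<not> countable (Field r)" and g: "\<gamma> \<in> Field r"
  shows "\<exists>l. is_limit r l \<and> (\<gamma>, l) \<in> r"
proof (rule ccontr)
  assume nl: "\<not> (\<exists>l. is_limit r l \<and> (\<gamma>, l) \<in> r)"
  have wo: "Well_order r" using co card_order_on_well_order_on by blast
  define s where "s x = (SOME y. is_succ r x y)" for x
  have P: "(\<gamma>, \<eta>) \<in> r \<longrightarrow> (\<exists>n. \<eta> = (s ^^ n) \<gamma>)" for \<eta>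
  proof (induction \<eta> rule: wf_induct_rule[OF wo_facts(5)[OF wo]])
    case (1 \<eta>)
    show ?case
    proof
      assume ge: "(\<gamma>, \<eta>) \<in> r"
      show "\<exists>n. \<eta> = (s ^^ n) \<gamma>"
      proof (cases "\<eta> = \<gamma>")
        case True then show ?thesis by (metis funpow_0)
      next
        case False
        then have st: "strict_lt r \<gamma> \<eta>" using ge by (simp add: strict_lt_def)
        then have eF: "\<eta> \<in> Field r" using strict_Field[OF st] by blast
        have "\<not> is_limit r \<eta>" using nl ge by blast
        then obtain \<delta> where d: "is_succ r \<delta> \<eta>" using eF st unfolding is_limit_def by blast
        then have sd: "strict_lt r \<delta> \<eta>" unfolding is_succ_def by blast
        then have dF: "\<delta> \<in> Field r" using strict_Field[OF sd] by blast
        have "(\<gamma>, \<delta>) \<in> r"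
        proof (rule ccontr)
          assume "(\<gamma>, \<delta>) \<notin> r"
          then have "strict_lt r \<delta> \<gamma>" using total_Field[OF wo dF g] refl_Field[OF wo g]
            unfolding strict_lt_def by blast
          then have "(\<eta>, \<gamma>) \<in> r" using d unfolding is_succ_def by blast
          then show False using antisym_r[OF wo ge] False by blast
        qed
        moreover have "(\<delta>, \<eta>) \<in> r - Id" using sd unfolding strict_lt_def by blast
        ultimately obtain n where "\<delta> = (s ^^ n) \<gamma>" using 1 by blast
        moreover have "s \<delta> = \<eta>"
        proof -
          have "is_succ r \<delta> (s \<delta>)" unfolding s_def using d by (rule someI)
          then show ?thesis using succ_unique[OF wo _ d] by blast
        qed
        ultimately have "\<eta> = (s ^^ Suc n) \<gamma>" by simp
        then show ?thesis by blast
      qed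
    qed
  qed
  have sub: "Field r \<subseteq> underS r \<gamma> \<union> range (\<lambda>n. (s ^^ n) \<gamma>)"
  proof
    fix \<eta> assume eF: "\<eta> \<in> Field r"
    show "\<eta> \<in> underS r \<gamma> \<union> range (\<lambda>n. (s ^^ n) \<gamma>)"
    proof (cases "(\<gamma>, \<eta>) \<in> r")
      case True then show ?thesis using P by blast
    next
      case False
      then have "(\<eta>, \<gamma>) \<in> r \<and> \<eta> \<noteq> \<gamma>" using total_Field[OF wo eF g] refl_Field[OF wo g] by blast
      then show ?thesis unfolding underS_def by blast
    qed
  qed
  have A: "(card_of (underS r \<gamma>), r) \<in> ordLess" using card_of_underS[OF co g] .
  have nat_less: "(card_of (UNIV::nat set), card_of (Field r)) \<in> ordLess"
  proof -
    have "(card_of (Field r), card_of (UNIV::nat set)) \<notin> ordLeq"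
      using unc unfolding countable_def card_of_ordLeq[symmetric] by blast
    then show ?thesis
      using not_ordLeq_iff_ordLess[OF card_of_Well_order[of "UNIV::nat set"] card_of_Well_order[of "Field r"]] by simp
  qed
  have FI: "(card_of (Field r), r) \<in> ordIso" using card_of_Field_ordIso[OF co] .
  have B: "(card_of (range (\<lambda>n. (s ^^ n) \<gamma>)), r) \<in> ordLess"
  proof -
    have "(card_of (range (\<lambda>n. (s ^^ n) \<gamma>)), card_of (UNIV::nat set)) \<in> ordLeq"
      by (rule card_of_image)
    then have "(card_of (range (\<lambda>n. (s ^^ n) \<gamma>)), card_of (Field r)) \<in> ordLess"
      using nat_less ordLeq_ordLess_trans by blast
    then show ?thesis using FI ordLess_ordIso_trans by blast
  qed
  have inf: "\<not> finite (Field r)" using unc countable_finite by blast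
  have "(card_of (underS r \<gamma> \<union> range (\<lambda>n. (s ^^ n) \<gamma>)), r) \<in> ordLess"
    using card_of_Un_ordLess_infinite_Field[OF inf co A B] .
  moreover have "(card_of (Field r), card_of (underS r \<gamma> \<union> range (\<lambda>n. (s ^^ n) \<gamma>))) \<in> ordLeq"
    using card_of_mono1[OF sub] .
  ultimately have "(card_of (Field r), r) \<in> ordLess" using ordLeq_ordLess_trans by blast
  then have "(r, r) \<in> ordLess" using FI ordIso_symmetric ordIso_ordLess_trans by blast
  then show False using ordLess_irreflexive by blast
qed

lemma normal_imp:
  assumes co: "Card_order r" and unc: "\<not> countable (Field r)" and id: "is_ideal r I"
    and nm: "normal_ideal r I"
  shows "pleasant_ideal r I \<and> succ_of_limits r \<in> I"
proof
  have wo: "Well_order r" using co card_order_on_well_order_on by blast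
  have sub: "\<And>X Y. X \<in> I \<Longrightarrow> Y \<subseteq> X \<Longrightarrow> Y \<in> I" using ideal_sub0[OF id] by blast
  show "pleasant_ideal r I" unfolding pleasant_ideal_def
  proof (intro allI impI)
    fix A X assume h: "A \<in> I \<and> (\<forall>\<alpha>\<in>Field r. X \<alpha> \<in> I)"
    have "diag_union r (Field r) X \<in> I"
      using nm h unfolding normal_ideal_def by simp
    moreover have "diag_union r A X \<subseteq> diag_union r (Field r) X"
    proof
      fix \<xi> assume "\<xi> \<in> diag_union r A X"
      then obtain \<alpha> where a: "\<xi> \<in> Field r" "strict_lt r \<alpha> \<xi>" "\<alpha> \<in> A" "\<xi> \<in> X \<alpha>"
        unfolding diag_union_def by blast
      have "\<alpha> \<in> Field r" using strict_F1[OF a(2)] .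
      then show "\<xi> \<in> diag_union r (Field r) X" using a unfolding diag_union_def by blast
    qed
    ultimately show "diag_union r A X \<in> I" using sub by blast
  qed
  define X where "X \<alpha> = {b. is_limit r \<alpha> \<and> is_succ r \<alpha> b}" for \<alpha>
  have "Field r \<noteq> {}" using unc by auto
  then obtain a0 where a0: "a0 \<in> Field r" by blast
  have sing: "\<And>a. a \<in> Field r \<Longrightarrow> {a} \<in> I" using ideal_sing0[OF id] by blast
  have XI: "X \<alpha> \<in> I" for \<alpha>
  proof (cases "X \<alpha> = {}")
    case True then show ?thesis using sub[OF sing[OF a0]] by blast
  next
    case False
    then obtain b where b: "b \<in> X \<alpha>" by blast
    then have bs: "is_succ r \<alpha> b" unfolding X_def by blast
    then have "b \<in> Field r" unfolding is_succ_def using strict_F2 by metis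
    moreover have "X \<alpha> \<subseteq> {b}"
    proof
      fix c assume "c \<in> X \<alpha>"
      then have "is_succ r \<alpha> c" unfolding X_def by blast
      then show "c \<in> {b}" using succ_unique[OF wo bs] by blast
    qed
    ultimately show ?thesis using sub sing by blast
  qed
  then have "diag_union r (Field r) X \<in> I" using nm[unfolded normal_ideal_def, rule_format, of X] by blast
  moreover have "succ_of_limits r \<subseteq> diag_union r (Field r) X"
  proof
    fix b assume "b \<in> succ_of_limits r"
    then obtain l where l: "is_limit r l" "is_succ r l b" unfolding succ_of_limits_def by blast
    then have "strict_lt r l b" unfolding is_succ_def by blast
    moreover have "l \<in> Field r" "b \<in> Field r" using strict_F1 strict_F2 \<open>strict_lt r l b\<close> by metis+
    ultimately show "b \<in> diag_union r (Field r) X" using l unfolding diag_union_def X_def by blast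
  qed
  ultimately show "succ_of_limits r \<in> I" using sub by blast
qed

lemma pleasant_imp:
  assumes co: "Card_order r" and unc: "\<not> countable (Field r)" and id: "is_ideal r I"
    and pl: "pleasant_ideal r I" and LI: "succ_of_limits r \<in> I"
  shows "normal_ideal r I"
  unfolding normal_ideal_def
proof (intro allI impI)
  fix X assume XI: "\<forall>\<alpha>\<in>Field r. X \<alpha> \<in> I"
  have wo: "Well_order r" using co card_order_on_well_order_on by blast
  have sub: "\<And>X Y. X \<in> I \<Longrightarrow> Y \<subseteq> X \<Longrightarrow> Y \<in> I" using ideal_sub0[OF id] by blast
  have un: "\<And>X Y. X \<in> I \<Longrightarrow> Y \<in> I \<Longrightarrow> X \<union> Y \<in> I" using ideal_un0[OF id] by blast
  define L where "L = succ_of_limits r"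
  define T where "T \<alpha> = {\<gamma> \<in> Field r. \<not> (\<exists>l. is_limit r l \<and> (\<gamma>, l) \<in> r \<and> (l, \<alpha>) \<in> r)}" for \<alpha>
  define Y where "Y \<gamma> = \<Union> (X ` {\<alpha> \<in> Field r. \<gamma> \<in> T \<alpha>})" for \<gamma>
  define W where "W = \<Union> (X ` {\<alpha> \<in> Field r. \<not> (\<exists>l. is_limit r l \<and> (l, \<alpha>) \<in> r)})"
  have bound: "{\<alpha> \<in> Field r. \<not> (\<exists>l. is_limit r l \<and> (\<gamma>, l) \<in> r \<and> (l, \<alpha>) \<in> r)} \<subseteq> underS r l"
    if "is_limit r l" "(\<gamma>, l) \<in> r" for \<gamma> l
  proof
    fix \<alpha> assume a: "\<alpha> \<in> {\<alpha> \<in> Field r. \<not> (\<exists>l. is_limit r l \<and> (\<gamma>, l) \<in> r \<and> (l, \<alpha>) \<in> r)}"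
    have lF: "l \<in> Field r" using that unfolding is_limit_def by blast
    have "\<not> (l, \<alpha>) \<in> r" using a that by blast
    then show "\<alpha> \<in> underS r l" using a total_Field[OF wo lF] refl_Field[OF wo lF]
      unfolding underS_def by blast
  qed
  have YI: "Y \<gamma> \<in> I" if g: "\<gamma> \<in> Field r" for \<gamma>
  proof -
    obtain l where l: "is_limit r l" "(\<gamma>, l) \<in> r" using limits_unbounded[OF co unc g] by blast
    have lF: "l \<in> Field r" using l unfolding is_limit_def by blast
    have "{\<alpha> \<in> Field r. \<gamma> \<in> T \<alpha>} \<subseteq> underS r l" using bound[OF l] g unfolding T_def by blast
    then have "(card_of {\<alpha> \<in> Field r. \<gamma> \<in> T \<alpha>}, r) \<in> ordLess"
      by (rule ordLeq_ordLess_trans[OF card_of_mono1 card_of_underS[OF co lF]])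
    then show ?thesis unfolding Y_def by (rule ideal_union_small[OF id]) (use XI in auto)
  qed
  have WI: "W \<in> I"
  proof -
    have "Field r \<noteq> {}" using unc by auto
    then obtain a0 where a0: "a0 \<in> Field r" by blast
    obtain l where l: "is_limit r l" "(a0, l) \<in> r" using limits_unbounded[OF co unc a0] by blast
    have lF: "l \<in> Field r" using l unfolding is_limit_def by blast
    have "{\<alpha> \<in> Field r. \<not> (\<exists>l. is_limit r l \<and> (l, \<alpha>) \<in> r)} \<subseteq> underS r l"
      using bound[OF l] by blast
    then have "(card_of {\<alpha> \<in> Field r. \<not> (\<exists>l. is_limit r l \<and> (l, \<alpha>) \<in> r)}, r) \<in> ordLess"
      by (rule ordLeq_ordLess_trans[OF card_of_mono1 card_of_underS[OF co lF]])
    then show ?thesis unfolding W_def by (rule ideal_union_small[OF id]) (use XI in auto)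
  qed
  have DI: "diag_union r L Y \<in> I" using pl LI YI unfolding pleasant_ideal_def L_def by blast
  have cover: "diag_union r (Field r) X \<subseteq> diag_union r L Y \<union> L \<union> W"
  proof
    fix \<xi> assume "\<xi> \<in> diag_union r (Field r) X"
    then obtain \<alpha> where xF: "\<xi> \<in> Field r" and sa: "strict_lt r \<alpha> \<xi>" and aF: "\<alpha> \<in> Field r"
      and xX: "\<xi> \<in> X \<alpha>" unfolding diag_union_def by blast
    have TF: "T \<alpha> \<subseteq> Field r" unfolding T_def by blast
    have xT: "\<xi> \<in> T \<alpha>"
    proof -
      have "\<not> (\<exists>l. is_limit r l \<and> (\<xi>, l) \<in> r \<and> (l, \<alpha>) \<in> r)"
      proof
        assume "\<exists>l. is_limit r l \<and> (\<xi>, l) \<in> r \<and> (l, \<alpha>) \<in> r"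
        then have "(\<xi>, \<alpha>) \<in> r" using trans_r[OF wo] by blast
        then show False using sa antisym_r[OF wo] unfolding strict_lt_def by blast
      qed
      then show ?thesis using xF unfolding T_def by blast
    qed
    define \<gamma> where "\<gamma> = wo_rel.minim r (T \<alpha>)"
    have wr: "wo_rel r" using wo unfolding wo_rel_def .
    have gT: "\<gamma> \<in> T \<alpha>" unfolding \<gamma>_def using wo_rel.minim_in[OF wr TF] xT by blast
    have gmin: "\<And>c. c \<in> T \<alpha> \<Longrightarrow> (\<gamma>, c) \<in> r" unfolding \<gamma>_def using wo_rel.minim_least[OF wr TF] by blast
    have gF: "\<gamma> \<in> Field r" using gT TF by blast
    have gx: "(\<gamma>, \<xi>) \<in> r" using gmin xT .
    have gY: "\<xi> \<in> Y \<gamma>" unfolding Y_def using aF gT xX by blast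
    show "\<xi> \<in> diag_union r L Y \<union> L \<union> W"
    proof (cases "\<exists>a. strict_lt r a \<gamma>")
      case False
      have "\<not> (\<exists>l. is_limit r l \<and> (l, \<alpha>) \<in> r)"
      proof
        assume "\<exists>l. is_limit r l \<and> (l, \<alpha>) \<in> r"
        then obtain l where l: "is_limit r l" "(l, \<alpha>) \<in> r" by blast
        have lF: "l \<in> Field r" using l unfolding is_limit_def by blast
        have "(\<gamma>, l) \<in> r" using False total_Field[OF wo lF gF] refl_Field[OF wo gF] unfolding strict_lt_def by blast
        then show False using gT l unfolding T_def by blast
      qed
      then have "\<xi> \<in> W" unfolding W_def using aF xX by blast
      then show ?thesis by blast
    next
      case True
      show ?thesis
      proof (cases "\<exists>\<delta>. is_succ r \<delta> \<gamma>")
        case True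
        then obtain \<delta> where d: "is_succ r \<delta> \<gamma>" by blast
        then have sd: "strict_lt r \<delta> \<gamma>" unfolding is_succ_def by blast
        then have dF: "\<delta> \<in> Field r" using strict_Field[OF sd] by blast
        have "\<delta> \<notin> T \<alpha>"
        proof
          assume "\<delta> \<in> T \<alpha>"
          then have "(\<gamma>, \<delta>) \<in> r" using gmin by blast
          then show False using sd antisym_r[OF wo] unfolding strict_lt_def by blast
        qed
        then obtain l where l: "is_limit r l" "(\<delta>, l) \<in> r" "(l, \<alpha>) \<in> r" using dF unfolding T_def by blast
        have ngl: "(\<gamma>, l) \<notin> r" using gT l unfolding T_def by blast
        have "l = \<delta>"
        proof (rule ccontr)
          assume "l \<noteq> \<delta>"
          then have "strict_lt r \<delta> l" using l unfolding strict_lt_def by blast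
          then show False using d ngl unfolding is_succ_def by blast
        qed
        then have gL: "\<gamma> \<in> L" using l d unfolding L_def succ_of_limits_def by blast
        show ?thesis
        proof (cases "\<gamma> = \<xi>")
          case True then show ?thesis using gL by blast
        next
          case False
          then have "strict_lt r \<gamma> \<xi>" using gx unfolding strict_lt_def by blast
          then have "\<xi> \<in> diag_union r L Y" unfolding diag_union_def using xF gL gY by blast
          then show ?thesis by blast
        qed
      next
        case False
        have nga: "(\<gamma>, \<alpha>) \<notin> r"
        proof
          assume "(\<gamma>, \<alpha>) \<in> r"
          moreover have "is_limit r \<gamma>" using gF True False unfolding is_limit_def by blast
          ultimately show False using gT refl_Field[OF wo gF] unfolding T_def by blast
        qed
        then have sag: "strict_lt r \<alpha> \<gamma>" using total_Field[OF wo aF gF] refl_Field[OF wo aF]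
          unfolding strict_lt_def by blast
        have "is_succ r \<alpha> \<gamma>"
          unfolding is_succ_def
        proof (intro conjI allI impI sag)
          fix c assume sc: "strict_lt r \<alpha> c"
          then have cF: "c \<in> Field r" using strict_Field[OF sc] by blast
          have "c \<in> T \<alpha>"
          proof -
            have "\<not> (\<exists>l. is_limit r l \<and> (c, l) \<in> r \<and> (l, \<alpha>) \<in> r)"
            proof
              assume "\<exists>l. is_limit r l \<and> (c, l) \<in> r \<and> (l, \<alpha>) \<in> r"
              then have "(c, \<alpha>) \<in> r" using trans_r[OF wo] by blast
              then show False using sc antisym_r[OF wo] unfolding strict_lt_def by blast
            qed
            then show ?thesis using cF unfolding T_def by blast
          qed
          then show "(\<gamma>, c) \<in> r" using gmin by blast
        qed
        then show ?thesis using False by blast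
      qed
    qed
  qed
  have "diag_union r L Y \<union> L \<union> W \<in> I" using DI LI WI unfolding L_def by (intro un)
  then show "diag_union r (Field r) X \<in> I" by (rule sub[OF _ cover])
qed

theorem corollary3p8:
  fixes r :: "'a rel" and I :: "'a set set"
  assumes "Card_order r" and "regularCard r" and "\<not> countable (Field r)"
    and "is_ideal r I"
  shows "normal_ideal r I \<longleftrightarrow> pleasant_ideal r I \<and> succ_of_limits r \<in> I"
proof
  assume "normal_ideal r I"
  then show "pleasant_ideal r I \<and> succ_of_limits r \<in> I" by (rule normal_imp[OF assms(1,3,4)])
next
  assume h: "pleasant_ideal r I \<and> succ_of_limits r \<in> I"
  show "normal_ideal r I" using pleasant_imp[OF assms(1,3,4)] h by simp
qed

end
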